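(* For every parameter $\rho\in\{\mathrm{sn},\underline{\mathrm{lcs}},\overline{\mathrm{scs}},\overline{\mathrm{lcs}}\}$ and every $N>0$, there exist graphs $H\subsetneq G$ ($H$ a proper subgraph of $G$) with $\chi(H)=\chi(G)$ such that $\rho(H)>N\rho(G)$.
   Context: All graphs are finite and simple. For a graph $G=(V,E)$ with $k=\chi(G)$, a proper $k$-colouring is a map $c:V\to[k]$ with $c(u)\neq c(v)$ for every edge $uv$. A set $S\subseteq V$ is a determining set for $(G,c)$ if there is no proper $k$-colouring $c'\neq c$ with $c'(s)=c(s)$ for all $s\in S$; a critical set is an inclusion-minimal determining set. $\mathrm{scs}(G,c)$ and $\mathrm{lcs}(G,c)$ are the sizes of a smallest resp. largest critical set for $(G,c)$. Over all proper $\chi(G)$-colourings $c$: $\mathrm{sn}(G)=\min_c\mathrm{scs}(G,c)$, $\underline{\mathrm{lcs}}(G)=\min_c\mathrm{lcs}(G,c)$, $\overline{\mathrm{scs}}(G)=\max_c\mathrm{scs}(G,c)$, $\overline{\mathrm{lcs}}(G)=\max_c\mathrm{lcs}(G,c)$. *)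

theory Defs
  imports Complex_Main
begin

type_synonym 'a graph = "'a set \<times> 'a set set"

definition verts :: "'a graph \<Rightarrow> 'a set" where "verts G = fst G"
definition edges :: "'a graph \<Rightarrow> 'a set set" where "edges G = snd G"

definition simple_graph :: "'a graph \<Rightarrow> bool" where
  "simple_graph G \<longleftrightarrow> finite (verts G) \<and>
     (\<forall>e\<in>edges G. \<exists>u v. e = {u, v} \<and> u \<noteq> v \<and> u \<in> verts G \<and> v \<in> verts G)"

definition subgraph :: "'a graph \<Rightarrow> 'a graph \<Rightarrow> bool" where
  "subgraph H G \<longleftrightarrow> verts H \<subseteq> verts G \<and> edges H \<subseteq> edges G"

definition proper_subgraph :: "'a graph \<Rightarrow> 'a graph \<Rightarrow> bool" where
  "proper_subgraph H G \<longleftrightarrow> subgraph H G \<and> H \<noteq> G"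

text \<open>Proper k-colouring with colours [k] = {1..k}; only values on V matter.\<close>
definition proper_colouring :: "'a graph \<Rightarrow> nat \<Rightarrow> ('a \<Rightarrow> nat) \<Rightarrow> bool" where
  "proper_colouring G k c \<longleftrightarrow> (\<forall>v\<in>verts G. c v \<in> {1..k}) \<and>
     (\<forall>u v. {u, v} \<in> edges G \<longrightarrow> c u \<noteq> c v)"

definition chi :: "'a graph \<Rightarrow> nat" where
  "chi G = (LEAST k. \<exists>c. proper_colouring G k c)"

text \<open>Two colourings are equal as maps V \<rightarrow> [k] iff they agree on V.\<close>
definition determining :: "'a graph \<Rightarrow> ('a \<Rightarrow> nat) \<Rightarrow> 'a set \<Rightarrow> bool" where
  "determining G c S \<longleftrightarrow> S \<subseteq> verts G \<and>
     \<not> (\<exists>c'. proper_colouring G (chi G) c' \<and> (\<exists>v\<in>verts G. c' v \<noteq> c v) \<and>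
            (\<forall>s\<in>S. c' s = c s))"

definition critical :: "'a graph \<Rightarrow> ('a \<Rightarrow> nat) \<Rightarrow> 'a set \<Rightarrow> bool" where
  "critical G c S \<longleftrightarrow> determining G c S \<and> (\<forall>T. T \<subset> S \<longrightarrow> \<not> determining G c T)"

definition scs :: "'a graph \<Rightarrow> ('a \<Rightarrow> nat) \<Rightarrow> nat" where
  "scs G c = Min (card ` {S. critical G c S})"

definition lcs :: "'a graph \<Rightarrow> ('a \<Rightarrow> nat) \<Rightarrow> nat" where
  "lcs G c = Max (card ` {S. critical G c S})"

definition sn :: "'a graph \<Rightarrow> nat" where
  "sn G = Min {scs G c | c. proper_colouring G (chi G) c}"

definition lcs_min :: "'a graph \<Rightarrow> nat" where
  "lcs_min G = Min {lcs G c | c. proper_colouring G (chi G) c}"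

definition scs_max :: "'a graph \<Rightarrow> nat" where
  "scs_max G = Max {scs G c | c. proper_colouring G (chi G) c}"

definition lcs_max :: "'a graph \<Rightarrow> nat" where
  "lcs_max G = Max {lcs G c | c. proper_colouring G (chi G) c}"

end

theory Submission
  imports Defs
begin

definition star :: "nat \<Rightarrow> nat graph" where
  "star n = ({0..n}, {{0,i} | i. i \<in> {1..n}})"

definition tH :: "nat \<Rightarrow> nat graph" where
  "tH n = ({0..n}, {{0,1}})"

lemma star_verts[simp]: "verts (star n) = {0..n}" and star_edges: "edges (star n) = {{0,i} | i. i \<in> {1..n}}"
  by (simp_all add: star_def verts_def edges_def)

lemma tH_verts[simp]: "verts (tH n) = {0..n}" and tH_edges[simp]: "edges (tH n) = {{0,1}}"
  by (simp_all add: tH_def verts_def edges_def)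

lemma star_proper:
  "proper_colouring (star n) k c \<longleftrightarrow> (\<forall>v\<in>{0..n}. c v \<in> {1..k}) \<and> (\<forall>i\<in>{1..n}. c i \<noteq> c 0)"
  unfolding proper_colouring_def star_verts star_edges
  by (auto simp: doubleton_eq_iff)

lemma tH_proper:
  "proper_colouring (tH n) k c \<longleftrightarrow> (\<forall>v\<in>{0..n}. c v \<in> {1..k}) \<and> c 0 \<noteq> c 1"
  unfolding proper_colouring_def tH_verts tH_edges
  by (auto simp: doubleton_eq_iff)

lemma chi2:
  assumes "proper_colouring G 2 f" "a \<in> verts G" "b \<in> verts G" "{a,b} \<in> edges G"
  shows "chi G = 2"
  unfolding chi_def
proof (rule Least_equality)
  show "\<exists>c. proper_colouring G 2 c" using assms(1) by blast
next
  fix k assume "\<exists>c. proper_colouring G k c"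
  then obtain c where c: "proper_colouring G k c" by blast
  then have "c a \<in> {1..k}" "c b \<in> {1..k}" "c a \<noteq> c b"
    using assms unfolding proper_colouring_def by auto
  then show "2 \<le> k" by auto
qed

lemma chi_star: "n \<ge> 1 \<Longrightarrow> chi (star n) = 2"
  by (rule chi2[where f="\<lambda>v. if v = 0 then 1 else 2" and a=0 and b=1])
     (auto simp: star_proper star_edges)

lemma chi_tH: "n \<ge> 1 \<Longrightarrow> chi (tH n) = 2"
  by (rule chi2[where f="\<lambda>v. if v = 0 then 1 else 2" and a=0 and b=1])
     (auto simp: tH_proper)

lemma two_vals: "(a::nat) \<in> {1..2} \<Longrightarrow> b \<in> {1..2} \<Longrightarrow> a \<noteq> b \<Longrightarrow> b = 3 - a"
  by auto

lemma three_inj: "(a::nat) \<le> 2 \<Longrightarrow> b \<le> 2 \<Longrightarrow> 3 - a = 3 - b \<Longrightarrow> a = b"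
  by arith

lemma star_comp:
  assumes "proper_colouring (star n) 2 c" "i \<in> {1..n}"
  shows "c i = 3 - c 0" "c 0 = 3 - c i"
proof -
  have "c i \<in> {1..2}" "c 0 \<in> {1..2}" "c i \<noteq> c 0"
    using assms unfolding star_proper by auto
  then show "c i = 3 - c 0" "c 0 = 3 - c i" by auto
qed

lemma determiningI:
  assumes "S \<subseteq> verts G"
    "\<And>c'. proper_colouring G (chi G) c' \<Longrightarrow> \<forall>s\<in>S. c' s = c s \<Longrightarrow> \<forall>v\<in>verts G. c' v = c v"
  shows "determining G c S"
  using assms unfolding determining_def by blast

lemma determiningD:
  assumes "determining G c S" "proper_colouring G (chi G) c'" "v \<in> verts G" "c' v \<noteq> c v"
    "\<forall>s\<in>S. c' s = c s"
  shows False
  using assms unfolding determining_def by blast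

lemma star_det:
  assumes n: "n \<ge> 1" and c: "proper_colouring (star n) 2 c"
  shows "determining (star n) c S \<longleftrightarrow> S \<subseteq> {0..n} \<and> S \<noteq> {}"
proof
  assume d: "determining (star n) c S"
  have "S \<noteq> {}"
  proof
    assume S: "S = {}"
    let ?c = "\<lambda>v. 3 - c v"
    have cc: "\<forall>v\<in>{0..n}. c v \<in> {1..2}" "\<forall>i\<in>{1..n}. c i \<noteq> c 0" using c unfolding star_proper by auto
    have "proper_colouring (star n) 2 ?c" unfolding star_proper
    proof (intro conjI ballI)
      fix v assume "v \<in> {0..n}" then show "3 - c v \<in> {1..2}" using cc(1) by force
    next
      fix i assume i: "i \<in> {1..n}"
      then have "c i \<le> 2" "c 0 \<le> 2" using cc(1) by force+
      then show "3 - c i \<noteq> 3 - c 0" using cc(2) i three_inj by blast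
    qed
    moreover have "?c 0 \<noteq> c 0"
    proof -
      have "c 0 \<in> {1..2}" using cc(1) by simp
      then have "c 0 = 1 \<or> c 0 = 2" by auto
      then show ?thesis by auto
    qed
    ultimately show False using determiningD[OF d, of ?c 0] S chi_star[OF n] by auto
  qed
  then show "S \<subseteq> {0..n} \<and> S \<noteq> {}" using d unfolding determining_def by auto
next
  assume S: "S \<subseteq> {0..n} \<and> S \<noteq> {}"
  then obtain v where v: "v \<in> S" by blast
  have "\<forall>w\<in>{0..n}. c' w = c w" if c': "proper_colouring (star n) 2 c'" and ag: "\<forall>s\<in>S. c' s = c s" for c'
  proof -
    have cc: "\<forall>v\<in>{0..n}. c v \<in> {1..2}" "\<forall>i\<in>{1..n}. c i \<noteq> c 0" using c unfolding star_proper by auto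
    have cc': "\<forall>v\<in>{0..n}. c' v \<in> {1..2}" "\<forall>i\<in>{1..n}. c' i \<noteq> c' 0" using c' unfolding star_proper by auto
    have vS: "v \<in> {0..n}" using S v by auto
    have z: "c' 0 = c 0"
    proof (cases "v = 0")
      case True then show ?thesis using ag v by auto
    next
      case False
      then have "v \<in> {1..n}" using vS by auto
      then have "c' 0 = 3 - c' v" "c 0 = 3 - c v"
        using star_comp c c' by blast+
      then show ?thesis using ag v by auto
    qed
    show ?thesis
    proof
      fix w assume w: "w \<in> {0..n}"
      show "c' w = c w"
      proof (cases "w = 0")
        case True then show ?thesis using z by simp
      next
        case False
        then have "w \<in> {1..n}" using w by auto
        then have "c' w = 3 - c' 0" "c w = 3 - c 0"
          using star_comp c c' by blast+
        then show ?thesis using z by simp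
      qed
    qed
  qed
  note key = this
  show "determining (star n) c S"
  proof (rule determiningI)
    show "S \<subseteq> verts (star n)" using S by simp
  next
    fix c' assume "proper_colouring (star n) (chi (star n)) c'" "\<forall>s\<in>S. c' s = c s"
    then show "\<forall>v\<in>verts (star n). c' v = c v" using key[of c'] unfolding chi_star[OF n] star_verts by blast
  qed
qed

lemma star_crit:
  assumes n: "n \<ge> 1" and c: "proper_colouring (star n) 2 c"
  shows "card ` {S. critical (star n) c S} = {1}"
proof -
  have "critical (star n) c {0}"
    unfolding critical_def using star_det[OF n c] by auto
  moreover have "card S = 1" if "critical (star n) c S" for S
  proof -
    have d: "S \<subseteq> {0..n}" "S \<noteq> {}" and m: "\<forall>T. T \<subset> S \<longrightarrow> \<not> determining (star n) c T"
      using that star_det[OF n c] unfolding critical_def by auto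
    obtain v where v: "v \<in> S" using d by blast
    have "\<not> {v} \<subset> S" using m star_det[OF n c] v d by auto
    then have "S = {v}" using v by blast
    then show ?thesis by simp
  qed
  ultimately have "1 \<in> card ` {S. critical (star n) c S}" "card ` {S. critical (star n) c S} \<subseteq> {1}"
    by (force intro: image_eqI[of _ _ "{0}"])+
  then show ?thesis by blast
qed

lemma tH_comp:
  assumes "proper_colouring (tH n) 2 c" "n \<ge> 1"
  shows "c 1 = 3 - c 0" "c 0 = 3 - c 1"
proof -
  have "c 1 \<in> {1..2}" "c 0 \<in> {1..2}" "c 1 \<noteq> c 0"
    using assms unfolding tH_proper by auto
  then show "c 1 = 3 - c 0" "c 0 = 3 - c 1" by auto
qed

lemma tH_det:
  assumes n: "n \<ge> 1" and c: "proper_colouring (tH n) 2 c"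
  shows "determining (tH n) c S \<longleftrightarrow> S \<subseteq> {0..n} \<and> (0 \<in> S \<or> 1 \<in> S) \<and> {2..n} \<subseteq> S"
proof
  assume d: "determining (tH n) c S"
  have cc: "\<forall>v\<in>{0..n}. c v \<in> {1..2}" "c 0 \<noteq> c 1" using c unfolding tH_proper by auto
  have nd: "\<not> (proper_colouring (tH n) 2 c' \<and> c' v \<noteq> c v \<and> (\<forall>s\<in>S. c' s = c s))"
    if "v \<in> {0..n}" for c' v
    using determiningD[OF d, of c' v] that chi_tH[OF n] by auto
  have "0 \<in> S \<or> 1 \<in> S"
  proof (rule ccontr)
    assume S: "\<not> (0 \<in> S \<or> 1 \<in> S)"
    let ?c = "\<lambda>v. if v \<le> 1 then 3 - c v else c v"
    have "c 0 \<in> {1..2}" "c 1 \<in> {1..2}" using cc n by auto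
    then have "proper_colouring (tH n) 2 ?c" "?c 0 \<noteq> c 0"
      using cc unfolding tH_proper by auto
    moreover have "\<forall>s\<in>S. ?c s = c s"
    proof
      fix s assume s: "s \<in> S"
      have "s \<noteq> 0" using S s by metis
      moreover have "s \<noteq> 1" using S s by metis
      ultimately have "\<not> s \<le> 1" by arith
      then show "?c s = c s" by simp
    qed
    ultimately show False using nd[of 0 ?c] by auto
  qed
  moreover have "{2..n} \<subseteq> S"
  proof
    fix w assume w: "w \<in> {2..n}"
    show "w \<in> S"
    proof (rule ccontr)
      assume S: "w \<notin> S"
      let ?c = "c(w := 3 - c w)"
      have "c w \<in> {1..2}" using cc w by auto
      then have cw: "c w = 1 \<or> c w = 2" by auto
      have "proper_colouring (tH n) 2 ?c" unfolding tH_proper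
      proof (intro conjI ballI)
        fix v assume v: "v \<in> {0..n}"
        show "?c v \<in> {1..2}" using cw cc(1) v by (cases "v = w") auto
      next
        show "?c 0 \<noteq> ?c 1" using w cc by auto
      qed
      moreover have "?c w \<noteq> c w" using cw by auto
      moreover have "\<forall>s\<in>S. ?c s = c s" using S by auto
      ultimately show False using nd[of w ?c] w by auto
    qed
  qed
  ultimately show "S \<subseteq> {0..n} \<and> (0 \<in> S \<or> 1 \<in> S) \<and> {2..n} \<subseteq> S"
    using d unfolding determining_def by auto
next
  assume S: "S \<subseteq> {0..n} \<and> (0 \<in> S \<or> 1 \<in> S) \<and> {2..n} \<subseteq> S"
  have "\<forall>w\<in>{0..n}. c' w = c w" if c': "proper_colouring (tH n) 2 c'" and ag: "\<forall>s\<in>S. c' s = c s" for c'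
  proof
    fix w assume w: "w \<in> {0..n}"
    have z: "c' 0 = c 0 \<and> c' 1 = c 1"
      using S ag tH_comp[OF c n] tH_comp[OF c' n] by metis
    show "c' w = c w"
    proof (cases "w \<le> 1")
      case True then have "w = 0 \<or> w = 1" by auto
      then show ?thesis using z by auto
    next
      case False then have "w \<in> {2..n}" using w by auto
      then have "w \<in> S" using S by blast
      then show ?thesis using ag by blast
    qed
  qed
  note key = this
  show "determining (tH n) c S"
  proof (rule determiningI)
    show "S \<subseteq> verts (tH n)" using S by simp
  next
    fix c' assume "proper_colouring (tH n) (chi (tH n)) c'" "\<forall>s\<in>S. c' s = c s"
    then show "\<forall>v\<in>verts (tH n). c' v = c v" using key[of c'] unfolding chi_tH[OF n] tH_verts by blast
  qed
qed

lemma card_ins: "n \<ge> 1 \<Longrightarrow> x \<le> 1 \<Longrightarrow> card (insert x {2..n}) = (n::nat)"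
  by simp

lemma tH_crit:
  assumes n: "n \<ge> 1" and c: "proper_colouring (tH n) 2 c"
  shows "card ` {S. critical (tH n) c S} = {n}"
proof -
  note D = tH_det[OF n c]
  have crit0: "critical (tH n) c (insert 0 {2..n})"
    unfolding critical_def
  proof (intro conjI allI impI)
    show "determining (tH n) c (insert 0 {2..n})" using D by auto
  next
    fix T assume T: "T \<subset> insert 0 {2..n}"
    show "\<not> determining (tH n) c T"
    proof
      assume "determining (tH n) c T"
      then have "0 \<in> T \<or> 1 \<in> T" "{2..n} \<subseteq> T" using D by auto
      moreover have "1 \<notin> T" using T by auto
      ultimately have "insert 0 {2..n} \<subseteq> T" by auto
      then show False using T by auto
    qed
  qed
  have card0: "card (insert 0 {2..n}) = n" using n by (intro card_ins) auto
  have cardS: "card S = n" if cr: "critical (tH n) c S" for S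
  proof -
    have m: "\<forall>T. T \<subset> S \<longrightarrow> \<not> determining (tH n) c T"
      and dS: "determining (tH n) c S" using cr unfolding critical_def by blast+
    have "S \<subseteq> {0..n} \<and> (0 \<in> S \<or> 1 \<in> S) \<and> {2..n} \<subseteq> S"
      using dS D by simp
    then have d: "S \<subseteq> {0..n}" "0 \<in> S \<or> 1 \<in> S" "{2..n} \<subseteq> S" by auto
    have "\<not> (0 \<in> S \<and> 1 \<in> S)"
    proof
      assume a: "0 \<in> S \<and> 1 \<in> S"
      have "S - {1} \<subset> S" using a by auto
      have "S - {1} \<subseteq> {0..n}" "0 \<in> S - {1}" "{2..n} \<subseteq> S - {1}" using d a by auto
      then have "determining (tH n) c (S - {1})" using D by simp
      moreover note \<open>S - {1} \<subset> S\<close>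
      ultimately show False using m by blast
    qed
    note nb = this
    define x where "x = (if 0 \<in> S then 0 else (1::nat))"
    have x1: "x \<le> 1" "x \<in> S" using d(2) unfolding x_def by auto
    have x2: "\<forall>y\<in>S. y \<le> 1 \<longrightarrow> y = x"
    proof (intro ballI impI)
      fix y assume y: "y \<in> S" "y \<le> 1"
      then have "y = 0 \<or> y = 1" by auto
      then show "y = x" using nb y unfolding x_def by auto
    qed
    note x = x1 x2
    have "S = insert x {2..n}"
    proof
      show "S \<subseteq> insert x {2..n}"
      proof
        fix y assume y: "y \<in> S"
        show "y \<in> insert x {2..n}"
        proof (cases "y \<le> 1")
          case True then have "y = x" using x2 y by blast
          then show ?thesis by simp
        next
          case False then show ?thesis using d(1) y by auto
        qed
      qed
    next
      show "insert x {2..n} \<subseteq> S" using x1 d(3) by blast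
    qed
    moreover have "card (insert x {2..n}) = n" using n x1 by (intro card_ins) auto
    ultimately show ?thesis by simp
  qed
  have "n \<in> card ` {S. critical (tH n) c S}"
    by (rule image_eqI[of _ _ "insert 0 {2..n}"]) (use crit0 card0 in auto)
  moreover have "card ` {S. critical (tH n) c S} \<subseteq> {n}" using cardS by blast
  ultimately show ?thesis by blast
qed

lemma params:
  assumes ex: "\<exists>c. proper_colouring G (chi G) c"
    and all: "\<forall>c. proper_colouring G (chi G) c \<longrightarrow> card ` {S. critical G c S} = {k}"
  shows "sn G = k" "lcs_min G = k" "scs_max G = k" "lcs_max G = k"
proof -
  have sc: "scs G c = k" "lcs G c = k" if "proper_colouring G (chi G) c" for c
    using all that unfolding scs_def lcs_def by simp_all
  have "{scs G c | c. proper_colouring G (chi G) c} = {k}" using ex sc by auto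
  moreover have "{lcs G c | c. proper_colouring G (chi G) c} = {k}" using ex sc by auto
  ultimately show "sn G = k" "lcs_min G = k" "scs_max G = k" "lcs_max G = k"
    unfolding sn_def lcs_min_def scs_max_def lcs_max_def by simp_all
qed

lemma star_params:
  assumes n: "n \<ge> 1"
  shows "sn (star n) = 1" "lcs_min (star n) = 1" "scs_max (star n) = 1" "lcs_max (star n) = 1"
proof -
  have "proper_colouring (star n) 2 (\<lambda>v. if v = 0 then 1 else 2)" by (auto simp: star_proper)
  then have ex: "\<exists>c. proper_colouring (star n) (chi (star n)) c" using chi_star[OF n] by auto
  have all: "\<forall>c. proper_colouring (star n) (chi (star n)) c \<longrightarrow> card ` {S. critical (star n) c S} = {1}"
    using star_crit[OF n] unfolding chi_star[OF n] by blast
  show "sn (star n) = 1" "lcs_min (star n) = 1" "scs_max (star n) = 1" "lcs_max (star n) = 1"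
    using params[OF ex all] by blast+
qed

lemma tH_params:
  assumes n: "n \<ge> 1"
  shows "sn (tH n) = n" "lcs_min (tH n) = n" "scs_max (tH n) = n" "lcs_max (tH n) = n"
proof -
  have "proper_colouring (tH n) 2 (\<lambda>v. if v = 0 then 1 else 2)" by (auto simp: tH_proper)
  then have ex: "\<exists>c. proper_colouring (tH n) (chi (tH n)) c" using chi_tH[OF n] by auto
  have all: "\<forall>c. proper_colouring (tH n) (chi (tH n)) c \<longrightarrow> card ` {S. critical (tH n) c S} = {n}"
    using tH_crit[OF n] unfolding chi_tH[OF n] by blast
  show "sn (tH n) = n" "lcs_min (tH n) = n" "scs_max (tH n) = n" "lcs_max (tH n) = n"
    using params[OF ex all] by blast+
qed

lemma star_simple: "simple_graph (star n)"
  unfolding simple_graph_def star_verts star_edges by auto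

lemma tH_simple: "n \<ge> 1 \<Longrightarrow> simple_graph (tH n)"
  unfolding simple_graph_def tH_verts tH_edges by auto

lemma tH_sub: "n \<ge> 2 \<Longrightarrow> proper_subgraph (tH n) (star n)"
proof -
  assume n: "n \<ge> 2"
  have "{0,2} \<in> edges (star n)" using n unfolding star_edges by auto
  moreover have "{0::nat,2} \<notin> edges (tH n)" by (auto simp: doubleton_eq_iff)
  ultimately have "tH n \<noteq> star n" by metis
  moreover have "edges (tH n) \<subseteq> edges (star n)" unfolding star_edges using n by auto
  ultimately show ?thesis unfolding proper_subgraph_def subgraph_def by auto
qed

theorem proposition5:
  "\<forall>\<rho> \<in> {sn, lcs_min, scs_max, lcs_max :: nat graph \<Rightarrow> nat}. \<forall>N::real. N > 0 \<longrightarrow>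
     (\<exists>G H :: nat graph. simple_graph G \<and> simple_graph H \<and> proper_subgraph H G \<and>
        chi H = chi G \<and> real (\<rho> H) > N * real (\<rho> G))"
proof (intro ballI allI impI)
  fix \<rho> :: "nat graph \<Rightarrow> nat" and N :: real
  assume r: "\<rho> \<in> {sn, lcs_min, scs_max, lcs_max}" and N: "N > 0"
  define n where "n = nat \<lceil>N\<rceil> + 2"
  have n2: "n \<ge> 2" and n1: "n \<ge> 1" unfolding n_def by auto
  have nN: "real n > N" unfolding n_def by linarith
  have vals: "\<rho> (tH n) = n \<and> \<rho> (star n) = 1"
    using r tH_params[OF n1] star_params[OF n1] by auto
  show "\<exists>G H :: nat graph. simple_graph G \<and> simple_graph H \<and> proper_subgraph H G \<and>
        chi H = chi G \<and> real (\<rho> H) > N * real (\<rho> G)"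
  proof (intro exI conjI)
    show "simple_graph (star n)" by (rule star_simple)
    show "simple_graph (tH n)" by (rule tH_simple[OF n1])
    show "proper_subgraph (tH n) (star n)" by (rule tH_sub[OF n2])
    show "chi (tH n) = chi (star n)" using chi_star[OF n1] chi_tH[OF n1] by simp
    have "N * real (\<rho> (star n)) = N" using vals by simp
    also have "\<dots> < real (\<rho> (tH n))" using vals nN by simp
    finally show "real (\<rho> (tH n)) > N * real (\<rho> (star n))" .
  qed
qed

end
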